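(* Let $\ell\in\{-1,1\}^n$, $L=\ell\ell^T$, and $A=\lambda\ell\ell^T/\sqrt n+E$, where $E$ has i.i.d. $N(0,1)$ entries. Let $\kappa$ be a real parameter, $K\ge10^2$ and $\lambda\ge10^2K$. Let $\theta=e^{-\lambda^2/2+3\kappa+2K\lambda}$. Then with probability at least $1-e^{-10\kappa}-2/n^2$, for every $S\subseteq[n]$ with $|S|\ge(1-K/(3\lambda))n$, the matrix $(A\odot L)_{S\times S}$ is resolvable with parameters \[ \Big(0.5K\sqrt n,\ 1.1\sqrt n\Big(\theta+\frac{n-|S|}{n}+\frac{10^4\max(0,\kappa-\lambda)}{n}\Big)\Big). \]
   Context: $\odot$ is the entrywise product, $\langle X,Y\rangle=\sum_{ij}X_{ij}Y_{ij}$, and $M_{S\times S}$ is the submatrix of $M$ indexed by $S\times S$. Resolvability: an $m\times m$ matrix $X$ is $(d_1,d_2)$-resolvable if for all $x_1,\dots,x_m\in[0,1]$ with $\sum_ix_i\le10^{-6}m$ we have $\langle X,Y_x\rangle\ge d_1\sum_ix_i-d_2m$, where $(Y_x)_{ij}=x_i$. *)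

theory Defs
  imports "HOL-Probability.Probability"
begin

definition std_gaussian :: "real measure" where
  "std_gaussian = density lborel std_normal_density"

definition gaussian_matrix_space :: "nat \<Rightarrow> ((nat \<times> nat) \<Rightarrow> real) measure" where
  "gaussian_matrix_space n = PiM ({..<n} \<times> {..<n}) (\<lambda>_. std_gaussian)"

text \<open>Resolvability of the principal submatrix of X indexed by the finite set S
  (an m x m matrix with m = card S): for all x : S -> [0,1] with
  sum x <= 10^-6 m, we have <X_{SxS}, Y_x> >= d1 * sum x - d2 * m,
  where (Y_x)_{ij} = x_i.\<close>
definition resolvable_on :: "nat set \<Rightarrow> (nat \<Rightarrow> nat \<Rightarrow> real) \<Rightarrow> real \<Rightarrow> real \<Rightarrow> bool" where
  "resolvable_on S X d1 d2 \<longleftrightarrow>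
     (\<forall>x :: nat \<Rightarrow> real.
        (\<forall>i\<in>S. 0 \<le> x i \<and> x i \<le> 1) \<and> (\<Sum>i\<in>S. x i) \<le> 10 powr (-6) * real (card S) \<longrightarrow>
        (\<Sum>i\<in>S. \<Sum>j\<in>S. X i j * x i) \<ge> d1 * (\<Sum>i\<in>S. x i) - d2 * real (card S))"

end

theory Submission
  imports Defs
begin

lemma prob_space_std_gaussian: "prob_space std_gaussian"
  unfolding std_gaussian_def by (rule prob_space_normal_density) simp

lemma prob_space_gms: "prob_space (gaussian_matrix_space n)"
  unfolding gaussian_matrix_space_def by (rule prob_space_PiM) (rule prob_space_std_gaussian)

lemma nn_integral_std_normal: "(\<integral>\<^sup>+x. ennreal (std_normal_density x) \<partial>lborel) = 1"
  by (subst nn_integral_eq_integral) (auto simp: normal_density_nonneg)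

lemma mgf_std_gaussian: "(\<integral>\<^sup>+y. ennreal (exp (s*y)) \<partial>std_gaussian) = ennreal (exp (s^2/2))"
proof -
  have "(\<integral>\<^sup>+y. ennreal (exp (s*y)) \<partial>std_gaussian)
      = (\<integral>\<^sup>+y. ennreal (std_normal_density y) * ennreal (exp (s*y)) \<partial>lborel)"
    unfolding std_gaussian_def by (subst nn_integral_density) auto
  also have "\<dots> = (\<integral>\<^sup>+y. ennreal (exp (s^2/2)) * ennreal (std_normal_density (y - s)) \<partial>lborel)"
  proof (intro nn_integral_cong)
    fix y :: real
    have "std_normal_density y * exp (s*y) = exp (s^2/2) * std_normal_density (y - s)"
    proof -
      have e: "s*y + (- y\<^sup>2 / 2) = s^2/2 + (- (y-s)\<^sup>2 / 2)" by (simp add: power2_eq_square field_simps)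
      have "exp (s*y) * exp (- y\<^sup>2 / 2) = exp (s^2/2) * exp (- (y-s)\<^sup>2 / 2)"
        by (simp only: exp_add[symmetric] e)
      thus ?thesis unfolding std_normal_density_def by (simp add: algebra_simps)
    qed
    thus "ennreal (std_normal_density y) * ennreal (exp (s*y)) = ennreal (exp (s^2/2)) * ennreal (std_normal_density (y - s))"
      by (simp add: ennreal_mult'[symmetric])
  qed
  also have "\<dots> = ennreal (exp (s^2/2)) * (\<integral>\<^sup>+y. ennreal (std_normal_density (y - s)) \<partial>lborel)"
    by (rule nn_integral_cmult) auto
  also have "(\<integral>\<^sup>+y. ennreal (std_normal_density (y - s)) \<partial>lborel) = 1"
    using nn_integral_real_affine[of "\<lambda>y. ennreal (std_normal_density y)" 1 "-s"]
    by (simp add: nn_integral_std_normal)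
  finally show ?thesis by simp
qed

lemma chernoff_gms:
  fixes P :: "(nat \<times> nat) set" and \<sigma> :: "nat \<times> nat \<Rightarrow> real"
  assumes P: "P \<subseteq> {..<n}\<times>{..<n}" and sig: "\<forall>p\<in>P. \<sigma> p = 1 \<or> \<sigma> p = -1" and t: "t \<ge> 0"
  shows "measure (gaussian_matrix_space n) {\<omega> \<in> space (gaussian_matrix_space n). a \<le> (\<Sum>p\<in>P. \<sigma> p * \<omega> p)}
         \<le> exp (t^2 * real (card P) / 2 - t * a)"
proof -
  define I where "I = {..<n}\<times>{..<n}"
  define M where "M = gaussian_matrix_space n"
  have M_def': "M = PiM I (\<lambda>_. std_gaussian)" unfolding M_def I_def gaussian_matrix_space_def ..
  interpret PS: product_sigma_finite "\<lambda>_::nat\<times>nat. std_gaussian"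
    unfolding product_sigma_finite_def using prob_space_imp_sigma_finite[OF prob_space_std_gaussian] by simp
  interpret prob_space M unfolding M_def by (rule prob_space_gms)
  have finI: "finite I" unfolding I_def by simp
  have finP: "finite P" using P finite_subset by blast
  have sg: "space std_gaussian = UNIV" unfolding std_gaussian_def by simp
  define g where "g = (\<lambda>\<omega>::nat\<times>nat\<Rightarrow>real. \<Sum>p\<in>P. \<sigma> p * \<omega> p)"
  define f where "f = (\<lambda>p (y::real). ennreal (if p \<in> P then exp (t * \<sigma> p * y) else 1))"
  have comp: "(\<lambda>\<omega>. \<omega> p) \<in> borel_measurable M" if "p \<in> I" for p
  proof -
    have "(\<lambda>\<omega>. \<omega> p) \<in> measurable M std_gaussian" unfolding M_def'
      by (rule measurable_component_singleton) (rule that)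
    moreover have "sets std_gaussian = sets borel" unfolding std_gaussian_def by simp
    ultimately show ?thesis using measurable_cong_sets by blast
  qed
  have gm: "g \<in> borel_measurable M" unfolding g_def using P I_def comp
    by (intro borel_measurable_sum borel_measurable_times borel_measurable_const) auto
  have fpm: "f p \<in> borel_measurable borel" for p unfolding f_def by (cases "p \<in> P") simp_all
  have fm: "(\<lambda>\<omega>. \<Prod>p\<in>I. f p (\<omega> p)) \<in> borel_measurable M"
    by (intro borel_measurable_prod_ennreal measurable_compose[OF comp fpm])
  define B where "B = {\<omega> \<in> space M. a \<le> g \<omega>}"
  have "emeasure M B = (\<integral>\<^sup>+\<omega>. indicator B \<omega> \<partial>M)"
    using gm unfolding B_def by (intro nn_integral_indicator[symmetric]) measurable
  also have "\<dots> \<le> (\<integral>\<^sup>+\<omega>. ennreal (exp (- t * a)) * (\<Prod>p\<in>I. f p (\<omega> p)) \<partial>M)"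
  proof (intro nn_integral_mono)
    fix \<omega> assume \<omega>: "\<omega> \<in> space M"
    have "(\<Prod>p\<in>I. f p (\<omega> p)) = (\<Prod>p\<in>I. ennreal (if p \<in> P then exp (t * \<sigma> p * \<omega> p) else 1))"
      unfolding f_def ..
    also have "\<dots> = ennreal (\<Prod>p\<in>I. (if p \<in> P then exp (t * \<sigma> p * \<omega> p) else 1))"
      by (rule prod_ennreal) auto
    also have "(\<Prod>p\<in>I. (if p \<in> P then exp (t * \<sigma> p * \<omega> p) else 1)) = (\<Prod>p\<in>P. exp (t * \<sigma> p * \<omega> p))"
      using P finI unfolding I_def by (simp add: prod.If_cases Int_absorb1)
    also have "\<dots> = exp (t * g \<omega>)"
      unfolding g_def using finP by (simp add: exp_sum sum_distrib_left mult.assoc)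
    finally have eq: "(\<Prod>p\<in>I. f p (\<omega> p)) = ennreal (exp (t * g \<omega>))" .
    have "indicator B \<omega> \<le> ennreal (exp (- t * a) * exp (t * g \<omega>))"
    proof (cases "\<omega> \<in> B")
      case True
      then have "a \<le> g \<omega>" unfolding B_def by auto
      then have "0 \<le> t * (g \<omega> - a)" using t by simp
      then have "1 \<le> exp (t * (g \<omega> - a))" by simp
      also have "exp (t * (g \<omega> - a)) = exp (- t * a) * exp (t * g \<omega>)"
        by (simp add: exp_add[symmetric] algebra_simps)
      finally show ?thesis using True by simp
    qed simp
    thus "indicator B \<omega> \<le> ennreal (exp (- t * a)) * (\<Prod>p\<in>I. f p (\<omega> p))"
      by (simp add: eq ennreal_mult)
  qed
  also have "\<dots> = ennreal (exp (- t * a)) * (\<integral>\<^sup>+\<omega>. (\<Prod>p\<in>I. f p (\<omega> p)) \<partial>M)"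
    using fm by (intro nn_integral_cmult) auto
  also have "(\<integral>\<^sup>+\<omega>. (\<Prod>p\<in>I. f p (\<omega> p)) \<partial>M) = (\<Prod>p\<in>I. integral\<^sup>N std_gaussian (f p))"
    unfolding M_def' by (intro PS.product_nn_integral_prod finI) (simp add: fpm std_gaussian_def)
  also have "\<dots> = (\<Prod>p\<in>I. ennreal (if p \<in> P then exp (t^2/2) else 1))"
  proof (intro prod.cong refl)
    fix p assume "p \<in> I"
    show "integral\<^sup>N std_gaussian (f p) = ennreal (if p \<in> P then exp (t^2/2) else 1)"
    proof (cases "p \<in> P")
      case True
      have "(t * \<sigma> p)^2 = t^2" using sig True by (auto simp: power_mult_distrib)
      then show ?thesis using True mgf_std_gaussian[of "t * \<sigma> p"] unfolding f_def by simp
    next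
      case False
      then show ?thesis unfolding f_def
        using prob_space.emeasure_space_1[OF prob_space_std_gaussian] by simp
    qed
  qed
  also have "\<dots> = ennreal (\<Prod>p\<in>I. (if p \<in> P then exp (t^2/2) else 1))"
    by (rule prod_ennreal) auto
  also have "(\<Prod>p\<in>I. (if p \<in> P then exp (t^2/2) else 1)) = exp (t^2/2) ^ card P"
    using P finI unfolding I_def by (simp add: prod.If_cases Int_absorb1)
  also have "\<dots> = exp (t^2 * real (card P) / 2)"
    by (simp add: exp_of_nat_mult[symmetric] algebra_simps)
  finally have "emeasure M B \<le> ennreal (exp (t^2 * real (card P) / 2 - t * a))"
    by (simp add: ennreal_mult[symmetric] exp_add[symmetric] algebra_simps)
  then show ?thesis
    unfolding B_def g_def M_def[symmetric] by (simp add: emeasure_eq_measure)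
qed

lemma rat_approx: assumes "0 \<le> (x::real)" "0 < \<delta>" shows "\<exists>q\<in>\<rat>. 0 \<le> q \<and> q \<le> x \<and> x - q < \<delta>"
proof (cases "x = 0")
  case True then show ?thesis using assms by (intro bexI[of _ 0]) auto
next
  case False
  then have "max 0 (x - \<delta>) < x" using assms by auto
  from Rats_dense_in_real[OF this] obtain r where "r \<in> \<rat>" "max 0 (x - \<delta>) < r" "r < x" by blast
  then show ?thesis by (intro bexI[of _ r]) auto
qed

lemma resolvable_on_rat:
  fixes S :: "nat set" and Y :: "nat \<Rightarrow> nat \<Rightarrow> real"
  assumes fin: "finite S"
  defines "D \<equiv> {x \<in> PiE S (\<lambda>_. \<rat>). (\<forall>i\<in>S. 0 \<le> x i \<and> x i \<le> 1) \<and> (\<Sum>i\<in>S. x i) \<le> 10 powr (-6) * real (card S)}"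
  shows "resolvable_on S Y d1 d2 \<longleftrightarrow>
    (\<forall>x\<in>D. (\<Sum>i\<in>S. \<Sum>j\<in>S. Y i j * x i) \<ge> d1 * (\<Sum>i\<in>S. x i) - d2 * real (card S))"
proof
  assume "resolvable_on S Y d1 d2" then show "\<forall>x\<in>D. (\<Sum>i\<in>S. \<Sum>j\<in>S. Y i j * x i) \<ge> d1 * (\<Sum>i\<in>S. x i) - d2 * real (card S)"
    unfolding resolvable_on_def D_def by blast
next
  assume H: "\<forall>x\<in>D. (\<Sum>i\<in>S. \<Sum>j\<in>S. Y i j * x i) \<ge> d1 * (\<Sum>i\<in>S. x i) - d2 * real (card S)"
  define w where "w i = (\<Sum>j\<in>S. Y i j) - d1" for i
  define h where "h x = (\<Sum>i\<in>S. x i * w i) + d2 * real (card S)" for x :: "nat \<Rightarrow> real"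
  have hE: "(\<Sum>i\<in>S. \<Sum>j\<in>S. Y i j * x i) \<ge> d1 * (\<Sum>i\<in>S. x i) - d2 * real (card S) \<longleftrightarrow> h x \<ge> 0" for x
  proof -
    have "(\<Sum>i\<in>S. \<Sum>j\<in>S. Y i j * x i) - d1 * (\<Sum>i\<in>S. x i) = (\<Sum>i\<in>S. x i * w i)"
      unfolding w_def by (simp add: sum_distrib_left sum_distrib_right sum_subtractf algebra_simps)
    then show ?thesis unfolding h_def by linarith
  qed
  show "resolvable_on S Y d1 d2" unfolding resolvable_on_def
  proof (intro allI impI)
    fix x :: "nat \<Rightarrow> real"
    assume F: "(\<forall>i\<in>S. 0 \<le> x i \<and> x i \<le> 1) \<and> (\<Sum>i\<in>S. x i) \<le> 10 powr (-6) * real (card S)"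
    show "(\<Sum>i\<in>S. \<Sum>j\<in>S. Y i j * x i) \<ge> d1 * (\<Sum>i\<in>S. x i) - d2 * real (card S)"
    proof (rule ccontr)
      assume "\<not> ?thesis"
      then have hneg: "h x < 0" using hE by auto
      define C where "C = (\<Sum>i\<in>S. \<bar>w i\<bar>)"
      have C0: "C \<ge> 0" unfolding C_def by (simp add: sum_nonneg)
      define \<delta> where "\<delta> = - h x / (C + 1)"
      have \<delta>0: "\<delta> > 0" unfolding \<delta>_def using hneg C0 by (simp add: field_simps)
      have "\<forall>i\<in>S. \<exists>q\<in>\<rat>. 0 \<le> q \<and> q \<le> x i \<and> x i - q < \<delta>"
        using F \<delta>0 rat_approx by blast
      then obtain q where q: "\<And>i. i\<in>S \<Longrightarrow> q i \<in> \<rat> \<and> 0 \<le> q i \<and> q i \<le> x i \<and> x i - q i < \<delta>"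
        by metis
      define x' where "x' = restrict q S"
      have x'S: "i \<in> S \<Longrightarrow> x' i = q i" for i unfolding x'_def by simp
      have "x' \<in> D"
      proof -
        have "x' \<in> PiE S (\<lambda>_. \<rat>)" unfolding x'_def using q by auto
        moreover have "\<forall>i\<in>S. 0 \<le> x' i \<and> x' i \<le> 1" using q F x'S by force
        moreover have "(\<Sum>i\<in>S. x' i) \<le> (\<Sum>i\<in>S. x i)" using q x'S by (intro sum_mono) auto
        ultimately show ?thesis unfolding D_def using F by auto
      qed
      then have "h x' \<ge> 0" using H hE by blast
      moreover have "h x' - h x \<le> \<delta> * C"
      proof -
        have "h x' - h x = (\<Sum>i\<in>S. (x' i - x i) * w i)"
          unfolding h_def by (simp add: sum_subtractf[symmetric] algebra_simps)
        also have "\<dots> \<le> (\<Sum>i\<in>S. \<delta> * \<bar>w i\<bar>)"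
        proof (intro sum_mono)
          fix i assume i: "i \<in> S"
          have "(x' i - x i) * w i \<le> \<bar>x' i - x i\<bar> * \<bar>w i\<bar>" by (metis abs_ge_self abs_mult)
          also have "\<dots> \<le> \<delta> * \<bar>w i\<bar>" using q[OF i] x'S[OF i] by (intro mult_right_mono) auto
          finally show "(x' i - x i) * w i \<le> \<delta> * \<bar>w i\<bar>" .
        qed
        also have "\<dots> = \<delta> * C" unfolding C_def by (simp add: sum_distrib_left)
        finally show ?thesis .
      qed
      moreover have "\<delta> * C < - h x"
      proof -
        have "\<delta> * C < \<delta> * (C + 1)" using \<delta>0 by simp
        also have "\<dots> = - h x" unfolding \<delta>_def using C0 by simp
        finally show ?thesis .
      qed
      ultimately show False by linarith
    qed
  qed
qed

lemma sets_resolvable: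
  fixes S :: "nat set" and Y :: "'a \<Rightarrow> nat \<Rightarrow> nat \<Rightarrow> real"
  assumes fin: "finite S" and m: "\<And>i j. i \<in> S \<Longrightarrow> j \<in> S \<Longrightarrow> (\<lambda>\<omega>. Y \<omega> i j) \<in> borel_measurable M"
  shows "{\<omega> \<in> space M. resolvable_on S (Y \<omega>) d1 d2} \<in> sets M"
proof -
  define D where "D = {x \<in> PiE S (\<lambda>_. \<rat>). (\<forall>i\<in>S. 0 \<le> x i \<and> x i \<le> 1) \<and> (\<Sum>i\<in>S. x i) \<le> 10 powr (-6) * real (card S)}"
  have "{\<omega> \<in> space M. resolvable_on S (Y \<omega>) d1 d2} =
     {\<omega> \<in> space M. \<forall>x\<in>D. (\<Sum>i\<in>S. \<Sum>j\<in>S. Y \<omega> i j * x i) \<ge> d1 * (\<Sum>i\<in>S. x i) - d2 * real (card S)}"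
    using resolvable_on_rat[OF fin] unfolding D_def by blast
  also have "\<dots> \<in> sets M"
  proof (rule sets.sets_Collect_countable_All')
    fix x assume "x \<in> D"
    show "{\<omega> \<in> space M. (\<Sum>i\<in>S. \<Sum>j\<in>S. Y \<omega> i j * x i) \<ge> d1 * (\<Sum>i\<in>S. x i) - d2 * real (card S)} \<in> sets M"
      using m by (intro borel_measurable_le borel_measurable_sum borel_measurable_times borel_measurable_const) auto
  next
    have "countable (PiE S (\<lambda>_. \<rat>))" using fin by (intro countable_PiE) (auto simp: countable_rat)
    then show "countable D" unfolding D_def by (rule countable_subset[rotated]) auto
  qed
  finally show ?thesis .
qed

lemma sum_pos_part_ge:
  fixes w x :: "nat \<Rightarrow> real"
  assumes "finite S" "\<And>i. i \<in> S \<Longrightarrow> 0 \<le> x i \<and> x i \<le> 1"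
  shows "(\<Sum>i\<in>S. x i * w i) \<le> (\<Sum>i\<in>{i\<in>S. w i > 0}. w i)"
proof -
  have "(\<Sum>i\<in>S. x i * w i) \<le> (\<Sum>i\<in>S. if w i > 0 then w i else 0)"
  proof (intro sum_mono)
    fix i assume i: "i \<in> S"
    show "x i * w i \<le> (if w i > 0 then w i else 0)"
      using assms(2)[OF i] by (auto intro: mult_left_le_one_le mult_nonneg_nonpos simp: mult_le_cancel_right1 not_less)
  qed
  also have "\<dots> = (\<Sum>i\<in>{i\<in>S. w i > 0}. w i)"
    using assms(1) by (simp add: sum.inter_filter)
  finally show ?thesis .
qed

lemma sum_neg_part_le:
  fixes w x :: "nat \<Rightarrow> real"
  assumes "finite S" "\<And>i. i \<in> S \<Longrightarrow> 0 \<le> x i \<and> x i \<le> 1"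
  shows "(\<Sum>i\<in>{i\<in>S. w i < 0}. w i) \<le> (\<Sum>i\<in>S. x i * w i)"
proof -
  have "(\<Sum>i\<in>S. x i * (- w i)) \<le> (\<Sum>i\<in>{i\<in>S. - w i > 0}. - w i)"
    by (rule sum_pos_part_ge[OF assms])
  then show ?thesis by (simp add: sum_negf)
qed

lemma det_part:
  fixes n :: nat and l :: "nat \<Rightarrow> real" and lam K \<theta> Mk :: real and \<omega> :: "nat \<times> nat \<Rightarrow> real"
  assumes n1: "n \<ge> 1" and l_pm: "\<forall>i<n. l i \<in> {-1, 1}"
    and K_ge: "K \<ge> 10^2" and lam_ge: "lam \<ge> 10^2 * K" and \<theta>0: "\<theta> \<ge> 0" and Mk0: "Mk \<ge> 0"
    and G1: "\<And>U T. U \<subseteq> {..<n} \<Longrightarrow> T \<subseteq> {..<n} \<Longrightarrow>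
        (\<Sum>i\<in>U. \<Sum>j\<in>T. l i * l j * \<omega> (i,j)) \<le> sqrt (real n) * (K/6 * real (card U) + real (card T))"
    and G2: "\<And>U. U \<subseteq> {..<n} \<Longrightarrow>
        (\<Sum>i\<in>U. sqrt (real n) * (lam - K) + (\<Sum>j<n. l i * l j * \<omega> (i,j))) \<ge> - (sqrt (real n) * (\<theta> * real n + 10^4 * Mk))"
    and S: "S \<subseteq> {..<n}" and cardS: "real (card S) \<ge> (1 - K / (3 * lam)) * real n"
  shows "resolvable_on S (\<lambda>i j. (lam * l i * l j / sqrt (real n) + \<omega> (i, j)) * (l i * l j))
            (0.5 * K * sqrt (real n))
            (1.1 * sqrt (real n) * (\<theta> + (real n - real (card S)) / real n + 10^4 * Mk / real n))"
  unfolding resolvable_on_def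
proof (intro allI impI)
  fix x :: "nat \<Rightarrow> real"
  assume F: "(\<forall>i\<in>S. 0 \<le> x i \<and> x i \<le> 1) \<and> (\<Sum>i\<in>S. x i) \<le> 10 powr (-6) * real (card S)"
  then have x01: "\<And>i. i \<in> S \<Longrightarrow> 0 \<le> x i \<and> x i \<le> 1" by blast
  define s where "s = sqrt (real n)"
  define m where "m = card S"
  define T where "T = {..<n} - S"
  define X where "X = (\<Sum>i\<in>S. x i)"
  define Z where "Z i j = l i * l j * \<omega> (i,j)" for i j
  define R where "R i = (\<Sum>j<n. Z i j)" for i
  define C where "C i = (\<Sum>j\<in>T. Z i j)" for i
  have finS: "finite S" using S finite_subset by blast
  have s0: "s > 0" unfolding s_def using n1 by simp
  have ss: "s * s = real n" unfolding s_def by simp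
  have mn: "m \<le> n" unfolding m_def using card_mono[OF _ S] by simp
  have cardT: "real (card T) = real n - real m" unfolding T_def using S finS mn
    by (simp add: card_Diff_subset of_nat_diff m_def)
  have lsq: "l i * l i = 1" if "i \<in> S" for i using l_pm S that by auto
  have Kl: "K / (3 * lam) \<le> 1/300" using K_ge lam_ge by (simp add: field_simps)
  have lam0: "lam > 0" using K_ge lam_ge by simp
  have LHS: "(\<Sum>i\<in>S. \<Sum>j\<in>S. (lam * l i * l j / s + \<omega> (i, j)) * (l i * l j) * x i)
        = (\<Sum>i\<in>S. x i * (real m * lam / s + R i)) - (\<Sum>i\<in>S. x i * C i)"
  proof -
    have row: "(\<Sum>j\<in>S. (lam * l i * l j / s + \<omega> (i, j)) * (l i * l j) * x i) = x i * (real m * lam / s + R i) - x i * C i"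
      if i: "i \<in> S" for i
    proof -
      have "(\<Sum>j\<in>S. (lam * l i * l j / s + \<omega> (i, j)) * (l i * l j) * x i) = (\<Sum>j\<in>S. x i * (lam / s + Z i j))"
      proof (intro sum.cong refl)
        fix j assume j: "j \<in> S"
        have "(lam * l i * l j / s + \<omega> (i, j)) * (l i * l j) * x i = x i * (lam * (l i * l i) * (l j * l j) / s + Z i j)"
          unfolding Z_def by (simp add: algebra_simps)
        then show "(lam * l i * l j / s + \<omega> (i, j)) * (l i * l j) * x i = x i * (lam / s + Z i j)"
          using lsq[OF i] lsq[OF j] by simp
      qed
      also have "\<dots> = x i * (\<Sum>j\<in>S. lam / s + Z i j)" by (rule sum_distrib_left[symmetric])
      also have "(\<Sum>j\<in>S. lam / s + Z i j) = real m * lam / s + (\<Sum>j\<in>S. Z i j)"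
        unfolding m_def by (simp add: sum.distrib)
      also have "(\<Sum>j\<in>S. Z i j) = R i - C i"
      proof -
        have "R i = (\<Sum>j\<in>S. Z i j) + C i" unfolding R_def C_def T_def
          using sum.subset_diff[OF S, of "Z i"] by simp
        then show ?thesis by simp
      qed
      finally show ?thesis by (simp add: algebra_simps)
    qed
    show ?thesis by (simp add: row sum_subtractf)
  qed
  have claim1: "(\<Sum>i\<in>S. x i * C i) \<le> s * (K/6 * X + real (card T))"
  proof -
    define U1 where "U1 = {i\<in>S. C i - s*K/6 > 0}"
    have "(\<Sum>i\<in>S. x i * (C i - s*K/6)) \<le> (\<Sum>i\<in>U1. C i - s*K/6)"
      unfolding U1_def by (rule sum_pos_part_ge[OF finS x01])
    also have "\<dots> = (\<Sum>i\<in>U1. C i) - s*K/6 * real (card U1)" by (simp add: sum_subtractf)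
    also have "(\<Sum>i\<in>U1. C i) \<le> s * (K/6 * real (card U1) + real (card T))"
      using G1[of U1 T] S unfolding U1_def T_def C_def Z_def s_def by auto
    finally have "(\<Sum>i\<in>S. x i * (C i - s*K/6)) \<le> s * real (card T)" by (simp add: algebra_simps)
    moreover have "(\<Sum>i\<in>S. x i * (C i - s*K/6)) = (\<Sum>i\<in>S. x i * C i) - s*K/6 * X"
      unfolding X_def by (simp add: algebra_simps sum_subtractf sum_distrib_left sum_distrib_right)
    ultimately show ?thesis by (simp add: algebra_simps)
  qed
  define \<beta> where "\<beta> = s * (\<theta> * real n + 10^4 * Mk)"
  have claim2: "(\<Sum>i\<in>S. x i * (real m * lam / s + R i)) \<ge> (0.5 * K * s + K * s / 6) * X - \<beta>"
  proof -
    define w where "w i = real m * lam / s + R i - (0.5 * K * s + K * s / 6)" for i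
    define U2 where "U2 = {i\<in>S. w i < 0}"
    have mlam: "real m * lam / s \<ge> s * (lam - K/3)"
    proof -
      have "real m \<ge> (1 - K / (3 * lam)) * real n" using cardS unfolding m_def .
      then have "real m * lam \<ge> (1 - K / (3 * lam)) * real n * lam" using lam0 by (simp add: mult_right_mono)
      also have "(1 - K / (3 * lam)) * real n * lam = real n * (lam - K/3)" using lam0 by (simp add: field_simps)
      finally have "real m * lam \<ge> s * s * (lam - K/3)" using ss by simp
      then show ?thesis using s0 by (simp add: field_simps)
    qed
    have wge: "w i \<ge> s * (lam - K) + R i" for i
      unfolding w_def using mlam by (simp add: algebra_simps)
    have "(\<Sum>i\<in>U2. w i) \<le> (\<Sum>i\<in>S. x i * w i)" unfolding U2_def by (rule sum_neg_part_le[OF finS x01])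
    moreover have "(\<Sum>i\<in>U2. w i) \<ge> (\<Sum>i\<in>U2. s * (lam - K) + R i)" by (intro sum_mono wge)
    moreover have "(\<Sum>i\<in>U2. s * (lam - K) + R i) \<ge> - \<beta>"
      using G2[of U2] S unfolding U2_def \<beta>_def R_def Z_def s_def by auto
    moreover have "(\<Sum>i\<in>S. x i * w i) = (\<Sum>i\<in>S. x i * (real m * lam / s + R i)) - (0.5 * K * s + K * s / 6) * X"
      unfolding w_def X_def by (simp add: algebra_simps sum_subtractf sum_distrib_left sum_distrib_right)
    ultimately show ?thesis by linarith
  qed
  have budget: "\<beta> + s * (real n - real m) \<le> 1.1 * s * (\<theta> + (real n - real m) / real n + 10^4 * Mk / real n) * real m"
  proof -
    define Q where "Q = \<theta> * real n + (real n - real m) + 10^4 * Mk"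
    have Q0: "Q \<ge> 0" unfolding Q_def using \<theta>0 Mk0 mn by simp
    have mr: "1.1 * real m / real n \<ge> 1"
    proof -
      have "real m \<ge> (1 - K / (3 * lam)) * real n" using cardS unfolding m_def .
      moreover have "(1 - K / (3 * lam)) * real n \<ge> (299/300) * real n" using Kl by (intro mult_right_mono) auto
      ultimately have "real m \<ge> (299/300) * real n" by linarith
      then show ?thesis using n1 by (simp add: field_simps)
    qed
    have "\<beta> + s * (real n - real m) = s * Q" unfolding \<beta>_def Q_def by (simp add: algebra_simps)
    also have "\<dots> \<le> s * (1.1 * real m / real n * Q)"
      using mult_right_mono[OF mr Q0] s0 by (intro mult_left_mono) auto
    also have "\<dots> = 1.1 * s * (\<theta> + (real n - real m) / real n + 10^4 * Mk / real n) * real m"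
      unfolding Q_def using n1 by (simp add: field_simps)
    finally show ?thesis .
  qed
  have "(\<Sum>i\<in>S. \<Sum>j\<in>S. (lam * l i * l j / s + \<omega> (i, j)) * (l i * l j) * x i)
     \<ge> 0.5 * K * s * X - (\<beta> + s * (real n - real m))"
    using LHS claim1 claim2 cardT by (simp add: algebra_simps)
  then show "(\<Sum>i\<in>S. \<Sum>j\<in>S. (lam * l i * l j / sqrt (real n) + \<omega> (i, j)) * (l i * l j) * x i) \<ge>
      0.5 * K * sqrt (real n) * (\<Sum>i\<in>S. x i) -
      1.1 * sqrt (real n) * (\<theta> + (real n - real (card S)) / real n + 10^4 * Mk / real n) * real (card S)"
    using budget unfolding s_def X_def m_def by linarith
qed

lemma sum_Pow_power:
  fixes q :: real
  assumes "finite A"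
  shows "(\<Sum>U\<in>Pow A. q ^ card U) = (1 + q) ^ card A"
  using assms
proof (induction A rule: finite_induct)
  case empty then show ?case by simp
next
  case (insert a A)
  have "Pow (insert a A) = Pow A \<union> insert a ` Pow A" by (rule Pow_insert)
  moreover have "Pow A \<inter> insert a ` Pow A = {}" using insert by auto
  moreover have "inj_on (insert a) (Pow A)" using insert by (auto simp: inj_on_def)
  ultimately have "(\<Sum>U\<in>Pow (insert a A). q ^ card U) = (\<Sum>U\<in>Pow A. q ^ card U) + (\<Sum>U\<in>Pow A. q ^ card (insert a U))"
    using insert by (simp add: sum.union_disjoint sum.reindex)
  also have "(\<Sum>U\<in>Pow A. q ^ card (insert a U)) = (\<Sum>U\<in>Pow A. q * q ^ card U)"
  proof (intro sum.cong refl)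
    fix U assume "U \<in> Pow A"
    then have "finite U" "a \<notin> U" using insert finite_subset by auto
    then show "q ^ card (insert a U) = q * q ^ card U" by simp
  qed
  also have "\<dots> = q * (\<Sum>U\<in>Pow A. q ^ card U)" by (simp add: sum_distrib_left)
  finally show ?case using insert by (simp add: algebra_simps)
qed

lemma bad1_bound:
  fixes n :: nat and l :: "nat \<Rightarrow> real" and K :: real
  assumes n1: "n \<ge> 1" and K: "K \<ge> 10^2" and l_pm: "\<forall>i<n. l i \<in> {-1, 1}"
    and U: "U \<subseteq> {..<n}" "U \<noteq> {}" and T: "T \<subseteq> {..<n}" "T \<noteq> {}"
  shows "measure (gaussian_matrix_space n) {\<omega> \<in> space (gaussian_matrix_space n).
      sqrt (real n) * (K/6 * real (card U) + real (card T)) \<le> (\<Sum>p\<in>U\<times>T. l (fst p) * l (snd p) * \<omega> p)}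
    \<le> exp (- K * real n / 3)"
proof -
  have lpm2: "l i * l j = 1 \<or> l i * l j = -1" if "i < n" "j < n" for i j
  proof -
    have "l i \<in> {-1,1}" "l j \<in> {-1,1}" using l_pm that by auto
    then show ?thesis by auto
  qed
  define u where "u = real (card U)"
  define v where "v = real (card T)"
  define a where "a = sqrt (real n) * (K/6 * u + v)"
  have finU: "finite U" using U finite_subset by blast
  have finT: "finite T" using T finite_subset by blast
  have u1: "u \<ge> 1" unfolding u_def using U finU by (simp add: Suc_le_eq card_gt_0_iff)
  have v1: "v \<ge> 1" unfolding v_def using T finT by (simp add: Suc_le_eq card_gt_0_iff)
  have cP: "real (card (U \<times> T)) = u * v" unfolding u_def v_def by (simp add: card_cartesian_product)
  have a0: "a \<ge> 0" unfolding a_def using K u1 v1 by simp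
  define t where "t = a / (u * v)"
  have t0: "t \<ge> 0" unfolding t_def using a0 u1 v1 by simp
  have "measure (gaussian_matrix_space n) {\<omega> \<in> space (gaussian_matrix_space n).
      a \<le> (\<Sum>p\<in>U\<times>T. (l (fst p) * l (snd p)) * \<omega> p)} \<le> exp (t^2 * real (card (U\<times>T)) / 2 - t * a)"
    using U T t0 lpm2 by (intro chernoff_gms) (auto simp: mult_ac subset_iff)
  also have "t^2 * real (card (U\<times>T)) / 2 - t * a = - (a^2) / (2 * u * v)"
    unfolding cP t_def using u1 v1 by (simp add: field_simps power2_eq_square)
  also have "- (a^2) / (2 * u * v) \<le> - K * real n / 3"
  proof -
    have "(K/6 * u + v)^2 \<ge> 4 * (K/6 * u) * v"
      using sum_squares_ge_zero[of "K/6*u - v" 0] by (simp add: power2_eq_square algebra_simps)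
    then have "real n * (2/3 * K * u * v) \<le> real n * (K/6 * u + v)^2"
      by (intro mult_left_mono) auto
    moreover have "a^2 = real n * (K/6 * u + v)^2" unfolding a_def by (simp add: power_mult_distrib)
    ultimately have "a^2 \<ge> real n * (2/3 * K * u * v)" by simp
    then have "a^2 / (2 * u * v) \<ge> real n * (2/3 * K * u * v) / (2 * u * v)"
      using u1 v1 by (intro divide_right_mono) auto
    also have "real n * (2/3 * K * u * v) / (2 * u * v) = K * real n / 3"
      using u1 v1 by (simp add: field_simps)
    finally show ?thesis by simp
  qed
  finally show ?thesis unfolding a_def u_def v_def by (simp add: mult_ac)
qed

lemma bad2_bound:
  fixes n :: nat and l :: "nat \<Rightarrow> real" and lam K b :: real
  assumes n1: "n \<ge> 1" and lK: "lam - K \<ge> 0" and l_pm: "\<forall>i<n. l i \<in> {-1, 1}"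
    and U: "U \<subseteq> {..<n}"
  shows "measure (gaussian_matrix_space n) {\<omega> \<in> space (gaussian_matrix_space n).
      sqrt (real n) * (lam - K) * real (card U) + sqrt (real n) * b \<le> (\<Sum>p\<in>U\<times>{..<n}. - (l (fst p) * l (snd p)) * \<omega> p)}
    \<le> exp (- ((lam - K)^2) / 2 * real (card U) - (lam - K) * b)"
proof -
  have lpm2: "l i * l j = 1 \<or> l i * l j = -1" if "i < n" "j < n" for i j
  proof -
    have "l i \<in> {-1,1}" "l j \<in> {-1,1}" using l_pm that by auto
    then show ?thesis by auto
  qed
  define u where "u = real (card U)"
  define s where "s = sqrt (real n)"
  have s0: "s > 0" unfolding s_def using n1 by simp
  have ss: "s * s = real n" unfolding s_def by simp
  have cP: "real (card (U \<times> {..<n})) = u * (s * s)" unfolding u_def ss by (simp add: card_cartesian_product)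
  define t where "t = (lam - K) / s"
  have t0: "t \<ge> 0" unfolding t_def using lK s0 by simp
  have "measure (gaussian_matrix_space n) {\<omega> \<in> space (gaussian_matrix_space n).
      s * (lam - K) * u + s * b \<le> (\<Sum>p\<in>U\<times>{..<n}. (- (l (fst p) * l (snd p))) * \<omega> p)}
      \<le> exp (t^2 * real (card (U\<times>{..<n})) / 2 - t * (s * (lam - K) * u + s * b))"
    using U t0 lpm2 by (intro chernoff_gms) (auto simp: subset_iff)
  also have "t^2 * real (card (U\<times>{..<n})) / 2 - t * (s * (lam - K) * u + s * b) = - ((lam - K)^2) / 2 * u - (lam - K) * b"
    unfolding cP t_def using s0 by (simp add: field_simps power2_eq_square)
  finally show ?thesis unfolding s_def u_def .
qed

lemma num1:
  fixes n :: nat and K :: real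
  assumes n1: "n \<ge> 1" and K: "K \<ge> 10^2"
  shows "(2^n * 2^n) * exp (- K * real n / 3) \<le> 1 / (real n)^2"
proof -
  have e4: "(4::real) \<le> exp 2"
  proof -
    have "(2::real) \<le> exp 1" using exp_ge_add_one_self[of 1] by simp
    then have "2 * 2 \<le> exp 1 * exp (1::real)" by (intro mult_mono) auto
    then show ?thesis by (simp add: exp_add[symmetric])
  qed
  have "(2::real)^n * 2^n = 4^n" by (simp add: power_mult_distrib[symmetric])
  also have "\<dots> \<le> exp 2 ^ n" using e4 by (intro power_mono) auto
  also have "\<dots> = exp (2 * real n)" by (simp add: exp_of_nat_mult[symmetric] mult.commute)
  finally have a: "(2::real)^n * 2^n \<le> exp (2 * real n)" .
  have "(2^n * 2^n) * exp (- K * real n / 3) \<le> exp (2 * real n) * exp (- K * real n / 3)"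
    using a by (intro mult_right_mono) auto
  also have "\<dots> = exp (2 * real n - K * real n / 3)" by (simp add: exp_add[symmetric])
  also have "\<dots> \<le> exp (- 2 * real n)"
  proof -
    have "K * real n / 3 \<ge> 100 * real n / 3" using K by (intro divide_right_mono mult_right_mono) auto
    then show ?thesis by simp
  qed
  also have "\<dots> \<le> 1 / (real n)^2"
  proof -
    have "real n \<le> exp (real n)" using exp_ge_add_one_self[of "real n"] by linarith
    then have "(real n)^2 \<le> exp (real n)^2" by (intro power_mono) auto
    also have "\<dots> = exp (2 * real n)" by (simp add: exp_of_nat_mult[symmetric] mult.commute)
    finally have "(real n)^2 \<le> exp (2 * real n)" .
    then have "1 / exp (2 * real n) \<le> 1 / (real n)^2" using n1 by (intro divide_left_mono) auto
    then show ?thesis by (simp add: exp_minus field_simps)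
  qed
  finally show ?thesis .
qed

lemma num2:
  fixes n :: nat and K lam \<kappa> :: real
  assumes n1: "n \<ge> 1" and K: "K \<ge> 10^2" and lam: "lam \<ge> 10^2 * K" and \<kappa>: "\<kappa> > 0"
  defines "\<theta> \<equiv> exp (- (lam\<^sup>2) / 2 + 3 * \<kappa> + 2 * K * lam)"
  defines "q \<equiv> exp (- ((lam - K)^2) / 2)"
  defines "Mk \<equiv> max 0 (\<kappa> - lam)"
  shows "exp (- (lam - K) * (\<theta> * real n + 10^4 * Mk)) * ((1 + q)^n - 1) \<le> exp (- 10 * \<kappa>)"
proof -
  define y where "y = \<theta> * real n"
  define L where "L = lam - K"
  have L: "L \<ge> 2" unfolding L_def using K lam by simp
  have y0: "y \<ge> 0" unfolding y_def \<theta>_def by simp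
  have q0: "q \<ge> 0" unfolding q_def by simp
  have Mk0: "Mk \<ge> 0" unfolding Mk_def by simp
  have qb: "q \<le> \<theta> * exp (- K * lam - 3 * \<kappa>)"
  proof -
    have "\<theta> * exp (- K * lam - 3 * \<kappa>) = exp (- (lam\<^sup>2) / 2 + K * lam)"
      unfolding \<theta>_def by (simp add: exp_add[symmetric] algebra_simps)
    moreover have "- ((lam - K)^2) / 2 \<le> - (lam\<^sup>2) / 2 + K * lam"
    proof -
      have "(lam - K)^2 = lam^2 - 2*K*lam + K^2" by (simp add: power2_eq_square algebra_simps)
      moreover have "K^2 \<ge> 0" by simp
      ultimately show ?thesis by linarith
    qed
    ultimately show ?thesis unfolding q_def by simp
  qed
  have nq: "real n * q \<le> y * exp (- K * lam - 3 * \<kappa>)"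
  proof -
    have "real n * q \<le> real n * (\<theta> * exp (- K * lam - 3 * \<kappa>))" using qb by (intro mult_left_mono) auto
    then show ?thesis unfolding y_def by (simp add: algebra_simps)
  qed
  have ek: "exp (- K * lam - 3 * \<kappa>) \<le> 1"
  proof -
    have "K * lam \<ge> 0" using K lam by simp
    then show ?thesis using \<kappa> by simp
  qed
  have nqy: "real n * q \<le> y" using nq ek y0 mult_left_le[of "exp (- K * lam - 3 * \<kappa>)" y] by linarith
  have "(1 + q)^n \<le> exp q ^ n" using q0 exp_ge_add_one_self[of q] by (intro power_mono) (auto simp: add.commute)
  also have "\<dots> = exp (real n * q)" by (simp add: exp_of_nat_mult[symmetric])
  finally have p1: "(1 + q)^n - 1 \<le> exp (real n * q) - 1" by simp
  have p2: "exp z - 1 \<le> z * exp z" if "z \<ge> 0" for z :: real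
  proof -
    have "1 - z \<le> exp (- z)" using exp_ge_add_one_self[of "-z"] by simp
    then have "(1 - z) * exp z \<le> exp (-z) * exp z" by (intro mult_right_mono) auto
    then show ?thesis by (simp add: exp_minus field_simps)
  qed
  have "(1 + q)^n - 1 \<le> real n * q * exp (real n * q)" using p1 p2[of "real n * q"] q0 by simp
  also have "\<dots> \<le> (y * exp (- K * lam - 3 * \<kappa>)) * exp y"
    using nqy q0 y0 by (intro mult_mono[OF nq]) auto
  finally have p3: "(1 + q)^n - 1 \<le> (y * exp (- K * lam - 3 * \<kappa>)) * exp y" .
  have "exp (- (lam - K) * (\<theta> * real n + 10^4 * Mk)) * ((1 + q)^n - 1)
      \<le> exp (- L * (y + 10^4 * Mk)) * ((y * exp (- K * lam - 3 * \<kappa>)) * exp y)"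
    unfolding L_def[symmetric] y_def[symmetric] using p3 by (intro mult_left_mono) auto
  also have "\<dots> = (y * exp (y - L * y)) * exp (- K * lam - 3 * \<kappa> - L * 10^4 * Mk)"
    by (simp add: exp_add[symmetric] exp_diff algebra_simps)
  also have "\<dots> \<le> 1 * exp (- 10 * \<kappa>)"
  proof (intro mult_mono)
    have "y * exp (y - L * y) \<le> y * exp (- y)"
    proof -
      have "y - L * y \<le> - y" using L y0 by (simp add: algebra_simps) (metis mult_right_mono mult_2 order.trans le_add_same_cancel1 y0 L mult.commute)
      then show ?thesis using y0 by (intro mult_left_mono) auto
    qed
    also have "\<dots> \<le> 1"
    proof -
      have "y \<le> exp y" using exp_ge_add_one_self[of y] by linarith
      then show ?thesis by (simp add: exp_minus field_simps)
    qed
    finally show "y * exp (y - L * y) \<le> 1" .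
    have "10 * \<kappa> \<le> K * lam + 3 * \<kappa> + L * 10^4 * Mk"
    proof (cases "\<kappa> \<le> lam")
      case True
      have "K * lam \<ge> 100 * lam" using K lam by (intro mult_right_mono) auto
      moreover have "L * 10^4 * Mk \<ge> 0" using L Mk0 by simp
      ultimately show ?thesis using True \<kappa> by linarith
    next
      case False
      then have M: "Mk = \<kappa> - lam" unfolding Mk_def by simp
      have "L * 10^4 * Mk \<ge> 7 * Mk" using L Mk0 by (intro mult_right_mono) auto
      moreover have "K * lam \<ge> 100 * lam" using K lam by (intro mult_right_mono) auto
      moreover have "lam \<ge> 0" using K lam by simp
      ultimately show ?thesis using M by linarith
    qed
    then show "exp (- K * lam - 3 * \<kappa> - L * 10^4 * Mk) \<le> exp (- 10 * \<kappa>)" by simp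
  qed (auto simp: y0)
  finally show ?thesis by simp
qed

lemma comp_gms: "p \<in> {..<n}\<times>{..<n} \<Longrightarrow> (\<lambda>\<omega>. \<omega> p) \<in> borel_measurable (gaussian_matrix_space n)"
proof -
  assume p: "p \<in> {..<n}\<times>{..<n}"
  have "(\<lambda>\<omega>. \<omega> p) \<in> measurable (gaussian_matrix_space n) std_gaussian" unfolding gaussian_matrix_space_def
    by (rule measurable_component_singleton) (rule p)
  moreover have "sets std_gaussian = sets borel" unfolding std_gaussian_def by simp
  ultimately show ?thesis using measurable_cong_sets by blast
qed

theorem mainTheorem17:
  fixes n :: nat and l :: "nat \<Rightarrow> real" and lam \<kappa> K :: real
  assumes l_pm: "\<forall>i<n. l i \<in> {-1, 1}"
    and K_ge: "K \<ge> 10^2"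
    and lam_ge: "lam \<ge> 10^2 * K"
  defines "\<theta> \<equiv> exp (- (lam\<^sup>2) / 2 + 3 * \<kappa> + 2 * K * lam)"
  shows "measure (gaussian_matrix_space n)
     {E \<in> space (gaussian_matrix_space n).
        \<forall>S. S \<subseteq> {..<n} \<and> real (card S) \<ge> (1 - K / (3 * lam)) * real n \<longrightarrow>
          resolvable_on S
            (\<lambda>i j. (lam * l i * l j / sqrt (real n) + E (i, j)) * (l i * l j))
            (0.5 * K * sqrt (real n))
            (1.1 * sqrt (real n) * (\<theta> + (real n - real (card S)) / real n
                 + 10^4 * max 0 (\<kappa> - lam) / real n))}
     \<ge> 1 - exp (- 10 * \<kappa>) - 2 / (real n)^2"
proof -
  define M where "M = gaussian_matrix_space n"
  interpret P: prob_space M unfolding M_def by (rule prob_space_gms)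
  define Xf where "Xf \<omega> = (\<lambda>i j. (lam * l i * l j / sqrt (real n) + \<omega> (i, j)) * (l i * l j))" for \<omega> :: "nat \<times> nat \<Rightarrow> real"
  define Mk where "Mk = max 0 (\<kappa> - lam)"
  define d2 where "d2 S = 1.1 * sqrt (real n) * (\<theta> + (real n - real (card S)) / real n + 10^4 * Mk / real n)" for S :: "nat set"
  define SS where "SS = {S. S \<subseteq> {..<n} \<and> real (card S) \<ge> (1 - K / (3 * lam)) * real n}"
  define A where "A = {\<omega> \<in> space M. \<forall>S\<in>SS. resolvable_on S (Xf \<omega>) (0.5 * K * sqrt (real n)) (d2 S)}"
  have Aeq: "{E \<in> space (gaussian_matrix_space n).
        \<forall>S. S \<subseteq> {..<n} \<and> real (card S) \<ge> (1 - K / (3 * lam)) * real n \<longrightarrow>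
          resolvable_on S
            (\<lambda>i j. (lam * l i * l j / sqrt (real n) + E (i, j)) * (l i * l j))
            (0.5 * K * sqrt (real n))
            (1.1 * sqrt (real n) * (\<theta> + (real n - real (card S)) / real n
                 + 10^4 * max 0 (\<kappa> - lam) / real n))} = A"
    unfolding A_def SS_def Xf_def d2_def Mk_def M_def by blast
  have Ameas: "A \<in> sets M" unfolding A_def
  proof (rule sets.sets_Collect_countable_All')
    fix S assume S: "S \<in> SS"
    then have finS: "finite S" unfolding SS_def using finite_subset by blast
    show "{\<omega> \<in> space M. resolvable_on S (Xf \<omega>) (0.5 * K * sqrt (real n)) (d2 S)} \<in> sets M"
    proof (rule sets_resolvable[OF finS])
      fix i j assume "i \<in> S" "j \<in> S"
      then have "(i, j) \<in> {..<n}\<times>{..<n}" using S unfolding SS_def by auto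
      from comp_gms[OF this] show "(\<lambda>\<omega>. Xf \<omega> i j) \<in> borel_measurable M" unfolding Xf_def M_def by simp
    qed
  next
    have "SS \<subseteq> Pow {..<n}" unfolding SS_def by auto
    then show "countable SS" using countable_finite finite_subset by blast
  qed
  show ?thesis
  proof (cases "n = 0")
    case True
    then have "SS = {{}}" unfolding SS_def by auto
    then have "A = space M" unfolding A_def by (simp add: resolvable_on_def)
    then have "measure M A = 1" by (simp add: P.prob_space)
    then show ?thesis using True unfolding Aeq M_def by simp
  next
    case False
    then have n1: "n \<ge> 1" by simp
    show ?thesis
    proof (cases "\<kappa> \<le> 0")
      case True
      then have "exp (- 10 * \<kappa>) \<ge> 1" by simp
      moreover have "measure M A \<ge> 0" by simp
      moreover have "2 / (real n)^2 \<ge> 0" by simp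
      ultimately show ?thesis unfolding Aeq unfolding M_def[symmetric] by linarith
    next
      case False
      then have \<kappa>0: "\<kappa> > 0" by simp
      have \<theta>0: "\<theta> \<ge> 0" unfolding \<theta>_def by simp
      have Mk0: "Mk \<ge> 0" unfolding Mk_def by simp
      define b where "b = \<theta> * real n + 10^4 * Mk"
      have b0: "b \<ge> 0" unfolding b_def using \<theta>0 Mk0 by simp
      have sn0: "sqrt (real n) \<ge> 0" by simp
      have lK: "lam - K \<ge> 0" using K_ge lam_ge by simp
      define I1 where "I1 = (Pow {..<n} - {{}}) \<times> (Pow {..<n} - {{}})"
      define B1 where "B1 p = {\<omega> \<in> space M. sqrt (real n) * (K/6 * real (card (fst p)) + real (card (snd p)))
          \<le> (\<Sum>q\<in>fst p \<times> snd p. l (fst q) * l (snd q) * \<omega> q)}" for p :: "nat set \<times> nat set"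
      define I2 where "I2 = Pow {..<n} - {{}}"
      define B2 where "B2 U = {\<omega> \<in> space M. sqrt (real n) * (lam - K) * real (card U) + sqrt (real n) * b
          \<le> (\<Sum>p\<in>U\<times>{..<n}. - (l (fst p) * l (snd p)) * \<omega> p)}" for U :: "nat set"
      have finI1: "finite I1" unfolding I1_def by simp
      have finI2: "finite I2" unfolding I2_def by simp
      have B1s: "B1 p \<in> sets M" if "p \<in> I1" for p
      proof -
        have "fst p \<times> snd p \<subseteq> {..<n}\<times>{..<n}" using that unfolding I1_def by auto
        then have "\<And>q. q \<in> fst p \<times> snd p \<Longrightarrow> (\<lambda>\<omega>. \<omega> q) \<in> borel_measurable M"
          unfolding M_def using comp_gms by blast
        then show ?thesis unfolding B1_def
          by (intro borel_measurable_le borel_measurable_sum borel_measurable_times borel_measurable_const) auto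
      qed
      have B2s: "B2 U \<in> sets M" if "U \<in> I2" for U
      proof -
        have "U \<times> {..<n} \<subseteq> {..<n}\<times>{..<n}" using that unfolding I2_def by auto
        then have "\<And>q. q \<in> U \<times> {..<n} \<Longrightarrow> (\<lambda>\<omega>. \<omega> q) \<in> borel_measurable M"
          unfolding M_def using comp_gms by blast
        then show ?thesis unfolding B2_def
          by (intro borel_measurable_le borel_measurable_sum borel_measurable_times borel_measurable_const) auto
      qed
      define Bad where "Bad = (\<Union>p\<in>I1. B1 p) \<union> (\<Union>U\<in>I2. B2 U)"
      have U1s: "(\<Union>p\<in>I1. B1 p) \<in> sets M" using B1s finI1 by blast
      have U2s: "(\<Union>U\<in>I2. B2 U) \<in> sets M" using B2s finI2 by blast
      have Bads: "Bad \<in> sets M" unfolding Bad_def using U1s U2s by blast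
      have sub: "space M - Bad \<subseteq> A"
      proof
        fix \<omega> assume \<omega>: "\<omega> \<in> space M - Bad"
        have G1: "(\<Sum>i\<in>U. \<Sum>j\<in>T. l i * l j * \<omega> (i,j)) \<le> sqrt (real n) * (K/6 * real (card U) + real (card T))"
          if U: "U \<subseteq> {..<n}" and T: "T \<subseteq> {..<n}" for U T
        proof (cases "U = {} \<or> T = {}")
          case True
          then show ?thesis using K_ge by auto
        next
          case False
          then have "(U, T) \<in> I1" unfolding I1_def using U T by auto
          then have "\<omega> \<notin> B1 (U, T)" using \<omega> unfolding Bad_def by blast
          then have "(\<Sum>q\<in>U \<times> T. l (fst q) * l (snd q) * \<omega> q) < sqrt (real n) * (K/6 * real (card U) + real (card T))"
            using \<omega> unfolding B1_def by auto
          then show ?thesis by (simp add: sum.cartesian_product')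
        qed
        have G2: "(\<Sum>i\<in>U. sqrt (real n) * (lam - K) + (\<Sum>j<n. l i * l j * \<omega> (i,j))) \<ge> - (sqrt (real n) * (\<theta> * real n + 10^4 * Mk))"
          if U: "U \<subseteq> {..<n}" for U
        proof (cases "U = {}")
          case True
          then show ?thesis using b0 unfolding b_def by simp
        next
          case False
          then have "U \<in> I2" unfolding I2_def using U by auto
          then have "\<omega> \<notin> B2 U" using \<omega> unfolding Bad_def by blast
          then have lt: "(\<Sum>p\<in>U\<times>{..<n}. - (l (fst p) * l (snd p)) * \<omega> p) < sqrt (real n) * (lam - K) * real (card U) + sqrt (real n) * b"
            using \<omega> unfolding B2_def by auto
          have "(\<Sum>p\<in>U\<times>{..<n}. - (l (fst p) * l (snd p)) * \<omega> p) = - (\<Sum>i\<in>U. \<Sum>j<n. l i * l j * \<omega> (i,j))"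
            by (simp add: sum.cartesian_product' sum_negf)
          moreover have "(\<Sum>i\<in>U. sqrt (real n) * (lam - K) + (\<Sum>j<n. l i * l j * \<omega> (i,j)))
              = sqrt (real n) * (lam - K) * real (card U) + (\<Sum>i\<in>U. \<Sum>j<n. l i * l j * \<omega> (i,j))"
            by (simp add: sum.distrib)
          ultimately show ?thesis using lt unfolding b_def by (simp add: algebra_simps)
        qed
        show "\<omega> \<in> A" unfolding A_def
        proof (intro CollectI conjI ballI)
          show "\<omega> \<in> space M" using \<omega> by blast
          fix S assume S: "S \<in> SS"
          show "resolvable_on S (Xf \<omega>) (0.5 * K * sqrt (real n)) (d2 S)"
          proof -
            have S1: "S \<subseteq> {..<n}" and S2: "real (card S) \<ge> (1 - K / (3 * lam)) * real n" using S unfolding SS_def by auto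
            show ?thesis unfolding Xf_def d2_def
              by (rule det_part) (rule G1 G2 S1 S2 n1 l_pm K_ge lam_ge \<theta>0 Mk0 | assumption)+
          qed
        qed
      qed
      have "measure M A \<ge> measure M (space M - Bad)" by (rule P.finite_measure_mono[OF sub Ameas])
      moreover have "measure M (space M - Bad) = 1 - measure M Bad" using P.prob_compl[OF Bads] by simp
      moreover have "measure M Bad \<le> measure M (\<Union>p\<in>I1. B1 p) + measure M (\<Union>U\<in>I2. B2 U)"
        unfolding Bad_def by (rule measure_Un_le[OF U1s U2s])
      moreover have "measure M (\<Union>p\<in>I1. B1 p) \<le> 2 / (real n)^2"
      proof -
        have "measure M (\<Union>p\<in>I1. B1 p) \<le> (\<Sum>p\<in>I1. measure M (B1 p))"
          by (rule measure_UNION_le[OF finI1 B1s])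
        also have "\<dots> \<le> (\<Sum>p\<in>I1. exp (- K * real n / 3))"
        proof (intro sum_mono)
          fix p assume p: "p \<in> I1"
          obtain U T where pUT: "p = (U, T)" by fastforce
          then have "U \<subseteq> {..<n}" "U \<noteq> {}" "T \<subseteq> {..<n}" "T \<noteq> {}" using p unfolding I1_def by auto
          from bad1_bound[OF n1 K_ge l_pm this]
          show "measure M (B1 p) \<le> exp (- K * real n / 3)" unfolding B1_def pUT M_def by simp
        qed
        also have "\<dots> = real (card I1) * exp (- K * real n / 3)" by simp
        also have "\<dots> \<le> (2^n * 2^n) * exp (- K * real n / 3)"
        proof -
          have "card I1 \<le> card (Pow {..<n} \<times> Pow {..<(n::nat)})" unfolding I1_def
            by (intro card_mono) auto
          also have "\<dots> = 2^n * 2^n" by (simp add: card_cartesian_product card_Pow)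
          finally have "real (card I1) \<le> real (2^n * 2^n)" by (simp only: of_nat_le_iff)
          then have "real (card I1) \<le> 2^n * 2^n" by simp
          then show ?thesis by (intro mult_right_mono) auto
        qed
        also have "\<dots> \<le> 1 / (real n)^2" by (rule num1[OF n1 K_ge])
        also have "\<dots> \<le> 2 / (real n)^2" by (simp add: divide_right_mono)
        finally show ?thesis .
      qed
      moreover have "measure M (\<Union>U\<in>I2. B2 U) \<le> exp (- 10 * \<kappa>)"
      proof -
        define q where "q = exp (- ((lam - K)^2) / 2)"
        have "measure M (\<Union>U\<in>I2. B2 U) \<le> (\<Sum>U\<in>I2. measure M (B2 U))"
          by (rule measure_UNION_le[OF finI2 B2s])
        also have "\<dots> \<le> (\<Sum>U\<in>I2. exp (- (lam - K) * b) * q ^ card U)"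
        proof (intro sum_mono)
          fix U assume U: "U \<in> I2"
          then have "U \<subseteq> {..<n}" unfolding I2_def by auto
          from bad2_bound[OF n1 lK l_pm this, of b]
          have "measure M (B2 U) \<le> exp (- ((lam - K)^2) / 2 * real (card U) - (lam - K) * b)"
            unfolding B2_def M_def by simp
          also have "\<dots> = exp (- (lam - K) * b) * q ^ card U"
          proof -
            have "exp (- ((lam - K)^2) / 2 * real (card U)) = q ^ card U"
              unfolding q_def by (simp add: exp_of_nat_mult[symmetric] mult.commute)
            moreover have "- ((lam - K)^2) / 2 * real (card U) - (lam - K) * b = - (lam - K) * b + - ((lam - K)^2) / 2 * real (card U)"
              by (simp add: algebra_simps)
            ultimately show ?thesis by (simp only: exp_add)
          qed
          finally show "measure M (B2 U) \<le> exp (- (lam - K) * b) * q ^ card U" .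
        qed
        also have "\<dots> = exp (- (lam - K) * b) * ((\<Sum>U\<in>Pow {..<n}. q ^ card U) - 1)"
        proof -
          have "(\<Sum>U\<in>Pow {..<n}. q ^ card U) = q ^ card ({}::nat set) + (\<Sum>U\<in>I2. q ^ card U)"
            unfolding I2_def by (subst sum.remove[of _ "{}"]) auto
          then show ?thesis by (simp add: sum_distrib_left[symmetric])
        qed
        also have "(\<Sum>U\<in>Pow {..<n}. q ^ card U) = (1 + q) ^ n"
          using sum_Pow_power[of "{..<n}" q] by simp
        also have "exp (- (lam - K) * b) * ((1 + q) ^ n - 1) \<le> exp (- 10 * \<kappa>)"
          unfolding b_def q_def Mk_def \<theta>_def by (rule num2[OF n1 K_ge lam_ge \<kappa>0])
        finally show ?thesis .
      qed
      ultimately have "measure M A \<ge> 1 - exp (- 10 * \<kappa>) - 2 / (real n)^2" by linarith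
      then show ?thesis unfolding Aeq unfolding M_def[symmetric] .
    qed
  qed
qed

end
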